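(* Let $R$ be a domain and let $G$ be a finite undirected graph without loops with vertex set $A=\{a_1,\dots,a_n\}$, $n\geqslant 2$, such that the complement graph $\overline{G}$ is connected. Let $L(A;G)$ be one of $\mathcal{L}(A;G)$, $\mathcal{M}(A;G)$, $\mathcal{N}_m(A;G)$ ($m\geqslant 2$), and suppose $L(A;G)=L_1\oplus L_2$ is a direct sum of two subalgebras such that for every $i\in\{1,\dots,n\}$ we have $(a_i)_1=a_i+g_i$ and $(a_i)_2=-g_i$ with $g_i\in L(A;G)$ and $a_i\notin\mathrm{supp}(\omega_1(g_i))$. Then $\omega_1(g_i)=0$ for all $i$.
   Context: All Lie algebras are over the domain $R$. The complement graph $\overline{G}$ has vertex set $A$, with distinct vertices adjacent iff they are not adjacent in $G$. The partially commutative Lie algebra in a variety $\mathfrak{M}$ with defining graph $G$ is the Lie algebra presented in $\mathfrak{M}$ by generators $A$ and relations $[a_p,a_q]=0$ for all edges $\{a_p,a_q\}$ of $G$. $\mathcal{L}(A;G)$: $\mathfrak{M}$ = all Lie algebras; $\mathcal{M}(A;G)$: metabelian Lie algebras ($[[x,y],[z,t]]=0$); $\mathcal{N}_m(A;G)$: nilpotent Lie algebras of degree $m$ (all Lie products of $m+1$ elements vanish). Since all relations and identities are multi-homogeneous, every element $h$ is uniquely a sum of nonzero multi-homogeneous components (multi-degree of a Lie monomial = vector counting occurrences of each $a_p$). $\mathrm{supp}(h)$ is the set of $a_p$ occurring with nonzero exponent in the multi-degree of some component of $h$; $\omega_1(h)$ is the sum of the components of length $1$. A direct sum $L=L_1\oplus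 L_2$ of subalgebras means $L_1,L_2$ are subalgebras, $L=L_1\oplus L_2$ as $R$-modules and $[L_1,L_2]=0$; for $h\in L$, $(h)_1\in L_1$, $(h)_2\in L_2$ are the unique elements with $h=(h)_1+(h)_2$. *)

theory Defs
  imports "HOL-Library.Poly_Mapping"
begin

text \<open>Lie monomials / nonassociative words: binary trees with leaves labelled by generators.\<close>
datatype 'a mtree = Leaf 'a | Br "'a mtree" "'a mtree"

type_synonym ('a, 'r) malg = "'a mtree \<Rightarrow>\<^sub>0 'r"

definition gen :: "'a \<Rightarrow> ('a, 'r::comm_ring_1) malg" where
  "gen a = Poly_Mapping.single (Leaf a) 1"

definition smul :: "'r::comm_ring_1 \<Rightarrow> ('a, 'r) malg \<Rightarrow> ('a, 'r) malg" where
  "smul r f = Poly_Mapping.map (\<lambda>c. r * c) f"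

definition mmul :: "('a, 'r::comm_ring_1) malg \<Rightarrow> ('a, 'r) malg \<Rightarrow> ('a, 'r) malg" where
  "mmul f g = (\<Sum>s\<in>Poly_Mapping.keys f. \<Sum>t\<in>Poly_Mapping.keys g.
      Poly_Mapping.single (Br s t) (Poly_Mapping.lookup f s * Poly_Mapping.lookup g t))"

inductive_set ideal_gen :: "('a, 'r::comm_ring_1) malg set \<Rightarrow> ('a, 'r) malg set"
  for S where
  base: "x \<in> S \<Longrightarrow> x \<in> ideal_gen S"
| zero: "0 \<in> ideal_gen S"
| add: "x \<in> ideal_gen S \<Longrightarrow> y \<in> ideal_gen S \<Longrightarrow> x + y \<in> ideal_gen S"
| scal: "x \<in> ideal_gen S \<Longrightarrow> smul r x \<in> ideal_gen S"
| mult_l: "x \<in> ideal_gen S \<Longrightarrow> mmul y x \<in> ideal_gen S"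
| mult_r: "x \<in> ideal_gen S \<Longrightarrow> mmul x y \<in> ideal_gen S"

datatype variety = AllLie | Metabelian | Nilpotent nat

inductive is_prod :: "nat \<Rightarrow> ('a, 'r::comm_ring_1) malg \<Rightarrow> bool" where
  one: "is_prod 1 x"
| br: "is_prod i x \<Longrightarrow> is_prod j y \<Longrightarrow> is_prod (i + j) (mmul x y)"

fun identities :: "variety \<Rightarrow> ('a, 'r::comm_ring_1) malg set" where
  "identities AllLie = {}"
| "identities Metabelian = {mmul (mmul x y) (mmul z t) | x y z t. True}"
| "identities (Nilpotent m) = {x. is_prod (Suc m) x}"

text \<open>The partially commutative Lie algebra L(A;G) in the variety is the
  quotient of the magma algebra by this ideal.\<close>
definition pc_ideal :: "variety \<Rightarrow> ('a \<Rightarrow> 'a \<Rightarrow> bool) \<Rightarrow> ('a, 'r::comm_ring_1) malg set" where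
  "pc_ideal V E = ideal_gen
     ({mmul x x | x. True}
      \<union> {mmul x (mmul y z) + mmul y (mmul z x) + mmul z (mmul x y) | x y z. True}
      \<union> {mmul (gen p) (gen q) | p q. E p q}
      \<union> identities V)"

text \<open>A subalgebra of the quotient L = M/I, represented by its preimage in M:
  an R-submodule of M containing I and closed under the bracket.\<close>
definition subalg_pre :: "('a, 'r::comm_ring_1) malg set \<Rightarrow> ('a, 'r) malg set \<Rightarrow> bool" where
  "subalg_pre I S \<longleftrightarrow> I \<subseteq> S \<and> 0 \<in> S \<and> (\<forall>x\<in>S. \<forall>y\<in>S. x + y \<in> S)
     \<and> (\<forall>r. \<forall>x\<in>S. smul r x \<in> S) \<and> (\<forall>x\<in>S. \<forall>y\<in>S. mmul x y \<in> S)"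

text \<open>L = L1 \<oplus> L2 (direct sum of subalgebras), in terms of preimages S1, S2:
  L1 + L2 = L, L1 \<inter> L2 = 0, [L1,L2] = 0.\<close>
definition direct_sum_pre ::
  "('a, 'r::comm_ring_1) malg set \<Rightarrow> ('a, 'r) malg set \<Rightarrow> ('a, 'r) malg set \<Rightarrow> bool" where
  "direct_sum_pre I S1 S2 \<longleftrightarrow> subalg_pre I S1 \<and> subalg_pre I S2
     \<and> (\<forall>h. \<exists>x\<in>S1. \<exists>y\<in>S2. h = x + y)
     \<and> S1 \<inter> S2 = I
     \<and> (\<forall>x\<in>S1. \<forall>y\<in>S2. mmul x y \<in> I)"

definition omega1 :: "('a::finite, 'r::comm_ring_1) malg \<Rightarrow> ('a, 'r) malg" where
  "omega1 h = (\<Sum>a\<in>UNIV. Poly_Mapping.single (Leaf a) (Poly_Mapping.lookup h (Leaf a)))"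

definition supp :: "('a, 'r::comm_ring_1) malg \<Rightarrow> 'a set" where
  "supp h = (\<Union>t\<in>Poly_Mapping.keys h. set_mtree t)"

definition compl_adj :: "('a \<Rightarrow> 'a \<Rightarrow> bool) \<Rightarrow> 'a \<Rightarrow> 'a \<Rightarrow> bool" where
  "compl_adj E x y \<longleftrightarrow> x \<noteq> y \<and> \<not> E x y"

definition compl_connected :: "('a \<Rightarrow> 'a \<Rightarrow> bool) \<Rightarrow> bool" where
  "compl_connected E \<longleftrightarrow> (\<forall>x y. (compl_adj E)\<^sup>*\<^sup>* x y)"

end

theory Submission
  imports Defs
begin

lemma lookup_smul: "Poly_Mapping.lookup (smul r f) k = r * Poly_Mapping.lookup f k"
  by (simp add: smul_def map.rep_eq when_def)

lemma lookup_gen: "Poly_Mapping.lookup (gen a :: ('a,'r::comm_ring_1) malg) k = (if k = Leaf a then 1 else 0)"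
  by (simp add: gen_def lookup_single when_def)

lemma lookup_mmul_Leaf: "Poly_Mapping.lookup (mmul f g) (Leaf c) = 0"
  by (simp add: mmul_def lookup_sum lookup_single when_def)

lemma lookup_mmul_Br:
  "Poly_Mapping.lookup (mmul f g) (Br s t) = Poly_Mapping.lookup f s * Poly_Mapping.lookup g t"
proof -
  have "Poly_Mapping.lookup (mmul f g) (Br s t) =
    (\<Sum>s'\<in>Poly_Mapping.keys f. \<Sum>t'\<in>Poly_Mapping.keys g.
      (if s' = s \<and> t' = t then Poly_Mapping.lookup f s' * Poly_Mapping.lookup g t' else 0))"
    by (simp add: mmul_def lookup_sum lookup_single when_def)
  also have "\<dots> = (\<Sum>s'\<in>Poly_Mapping.keys f. if s' = s then
      (\<Sum>t'\<in>Poly_Mapping.keys g. if t' = t then Poly_Mapping.lookup f s' * Poly_Mapping.lookup g t' else 0) else 0)"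
    by (rule sum.cong) auto
  also have "\<dots> = Poly_Mapping.lookup f s * Poly_Mapping.lookup g t"
    by (simp add: in_keys_iff)
  finally show ?thesis .
qed

lemma is_prod_lin:
  "is_prod k x \<Longrightarrow> k \<ge> 1 \<and> (k \<ge> 2 \<longrightarrow> (\<forall>c. Poly_Mapping.lookup x (Leaf c) = 0))"
  by (induction rule: is_prod.induct) (auto simp: lookup_mmul_Leaf)

lemma is_prod_mmul:
  assumes "is_prod k x" "k \<ge> 3"
  shows "\<exists>u v. x = mmul u v \<and> ((\<forall>c. Poly_Mapping.lookup u (Leaf c) = 0) \<or> (\<forall>c. Poly_Mapping.lookup v (Leaf c) = 0))"
  using assms
proof (cases rule: is_prod.cases)
  case one then show ?thesis using assms by simp
next
  case (br i u j v)
  have "i \<ge> 1" "j \<ge> 1" using br is_prod_lin by blast+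
  then have "i \<ge> 2 \<or> j \<ge> 2" using br assms by linarith
  then show ?thesis using br is_prod_lin by blast
qed

definition phi :: "'a \<Rightarrow> 'a \<Rightarrow> ('a,'r::comm_ring_1) malg \<Rightarrow> 'r" where
  "phi p q h = Poly_Mapping.lookup h (Br (Leaf p) (Leaf q)) - Poly_Mapping.lookup h (Br (Leaf q) (Leaf p))"

lemma phi_mmul: "phi p q (mmul f g) =
  Poly_Mapping.lookup f (Leaf p) * Poly_Mapping.lookup g (Leaf q)
  - Poly_Mapping.lookup f (Leaf q) * Poly_Mapping.lookup g (Leaf p)"
  by (simp add: phi_def lookup_mmul_Br)

lemma ideal_phi:
  fixes E :: "'a \<Rightarrow> 'a \<Rightarrow> bool"
  assumes "\<not> E p q" "\<not> E q p" "p \<noteq> q"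
    and var: "\<And>m. V = Nilpotent m \<Longrightarrow> m \<ge> 2"
    and h: "(h :: ('a,'r::comm_ring_1) malg) \<in> pc_ideal V E"
  shows "(\<forall>c. Poly_Mapping.lookup h (Leaf c) = 0) \<and> phi p q h = 0"
  using h unfolding pc_ideal_def
proof (induction rule: ideal_gen.induct)
  case (base x)
  then consider (a) "\<exists>y. x = mmul y y"
    | (b) "\<exists>u v w. x = mmul u (mmul v w) + mmul v (mmul w u) + mmul w (mmul u v)"
    | (c) "\<exists>p' q'. x = mmul (gen p') (gen q') \<and> E p' q'"
    | (d) "x \<in> identities V" by blast
  then show ?case
  proof cases
    case a then show ?thesis by (auto simp: lookup_mmul_Leaf phi_mmul mult.commute)
  next
    case b then show ?thesis
      by (auto simp: lookup_mmul_Leaf phi_def lookup_add lookup_mmul_Br)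
  next
    case c then show ?thesis using assms(1,2)
      by (auto simp: lookup_mmul_Leaf phi_mmul lookup_gen)
  next
    case d
    show ?thesis
    proof (cases V)
      case AllLie then show ?thesis using d by simp
    next
      case Metabelian then show ?thesis using d
        by (auto simp: lookup_mmul_Leaf phi_mmul)
    next
      case (Nilpotent m)
      then have "m \<ge> 2" using var by blast
      moreover have "is_prod (Suc m) x" using d Nilpotent by simp
      ultimately obtain u v where "x = mmul u v"
        "(\<forall>c. Poly_Mapping.lookup u (Leaf c) = 0) \<or> (\<forall>c. Poly_Mapping.lookup v (Leaf c) = 0)"
        using is_prod_mmul[of "Suc m" x] by auto
      then show ?thesis by (auto simp: lookup_mmul_Leaf phi_mmul)
    qed
  qed
next
  case zero then show ?case by (simp add: phi_def)
next
  case (add x y) then show ?case by (simp add: phi_def lookup_add)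
next
  case (scal x r) then show ?case by (simp add: phi_def lookup_smul right_diff_distrib)
next
  case (mult_l x y) then show ?case by (simp add: lookup_mmul_Leaf phi_mmul)
next
  case (mult_r x y) then show ?case by (simp add: lookup_mmul_Leaf phi_mmul)
qed

lemma supp_omega1:
  assumes "a \<notin> supp (omega1 (g :: ('a::finite,'r::comm_ring_1) malg))"
  shows "Poly_Mapping.lookup g (Leaf a) = 0"
proof -
  have "Poly_Mapping.lookup (omega1 g) (Leaf a) = Poly_Mapping.lookup g (Leaf a)"
    by (simp add: omega1_def lookup_sum lookup_single when_def)
  moreover have "Poly_Mapping.lookup (omega1 g) (Leaf a) = 0"
  proof (rule ccontr)
    assume "Poly_Mapping.lookup (omega1 g) (Leaf a) \<noteq> 0"
    then have "Leaf a \<in> Poly_Mapping.keys (omega1 g)" by (simp add: in_keys_iff)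
    then have "a \<in> supp (omega1 g)" unfolding supp_def by force
    then show False using assms by simp
  qed
  ultimately show ?thesis by simp
qed

theorem lemma3:
  fixes E :: "'a::finite \<Rightarrow> 'a \<Rightarrow> bool"
    and V :: variety
    and S1 S2 :: "('a, 'r::idom) malg set"
  assumes n2: "card (UNIV :: 'a set) \<ge> 2"
    and sym: "\<And>x y. E x y \<longleftrightarrow> E y x"
    and irrefl: "\<And>x. \<not> E x x"
    and conn: "compl_connected E"
    and var: "\<And>m. V = Nilpotent m \<Longrightarrow> m \<ge> 2"
    and ds: "direct_sum_pre (pc_ideal V E) S1 S2"
    and hyp: "\<And>a g. gen a + g \<in> S1 \<Longrightarrow> - g \<in> S2 \<Longrightarrow> a \<notin> supp (omega1 g)"
  shows "\<forall>a g. gen a + g \<in> S1 \<longrightarrow> - g \<in> S2 \<longrightarrow> omega1 g = 0"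
proof (intro allI impI)
  fix a0 g0
  assume g0: "gen a0 + g0 \<in> S1" "- g0 \<in> S2"
  let ?I = "pc_ideal V E :: ('a, 'r) malg set"
  have split: "\<forall>h. \<exists>x\<in>S1. \<exists>y\<in>S2. h = x + y"
    and orth: "\<forall>x\<in>S1. \<forall>y\<in>S2. mmul x y \<in> ?I"
    using ds unfolding direct_sum_pre_def by blast+
  have "\<forall>b. \<exists>g. gen b + g \<in> S1 \<and> - g \<in> S2 \<and> (b = a0 \<longrightarrow> g = g0)"
  proof
    fix b
    show "\<exists>g. gen b + g \<in> S1 \<and> - g \<in> S2 \<and> (b = a0 \<longrightarrow> g = g0)"
    proof (cases "b = a0")
      case True then show ?thesis using g0 by blast
    next
      case False
      obtain x y where "x \<in> S1" "y \<in> S2" "gen b = x + y" using split by blast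
      then have "gen b + (- y) \<in> S1" "- (- y) \<in> S2"
        by (simp_all add: algebra_simps)
      then show ?thesis using False by blast
    qed
  qed
  then obtain G where G0: "\<forall>b. gen b + G b \<in> S1 \<and> - G b \<in> S2 \<and> (b = a0 \<longrightarrow> G b = g0)"
    by (rule choice_iff[THEN iffD1, elim_format]) blast
  then have G: "\<And>b. gen b + G b \<in> S1" "\<And>b. - G b \<in> S2" "G a0 = g0" by blast+
  define X where "X b c = Poly_Mapping.lookup (gen b + G b) (Leaf c)" for b c
  define Y where "Y b c = Poly_Mapping.lookup (- G b) (Leaf c)" for b c
  have Gbb: "Poly_Mapping.lookup (G b) (Leaf b) = 0" for b
    using hyp[OF G(1) G(2)] supp_omega1 by blast
  have Xd: "X b c = (if b = c then 1 else 0) + Poly_Mapping.lookup (G b) (Leaf c)" for b c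
    by (simp add: X_def lookup_add lookup_gen)
  have Yd: "Y b c = - Poly_Mapping.lookup (G b) (Leaf c)" for b c
    by (simp add: Y_def)
  have key: "X a p * Y b q - X a q * Y b p = 0" if "compl_adj E p q" for a b p q
  proof -
    have "\<not> E p q" "\<not> E q p" "p \<noteq> q" using that sym by (auto simp: compl_adj_def)
    moreover have "mmul (gen a + G a) (- G b) \<in> ?I" using orth G by blast
    ultimately have "phi p q (mmul (gen a + G a) (- G b)) = 0"
      using ideal_phi[OF _ _ _ var, where h="mmul (gen a + G a) (- G b)"] by blast
    then show ?thesis by (simp add: phi_mmul X_def Y_def)
  qed
  have zero: "Poly_Mapping.lookup (G b) (Leaf p) = 0" if "compl_adj E p q" for b p q
  proof -
    have pq: "p \<noteq> q" using that by (simp add: compl_adj_def)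
    have qp: "compl_adj E q p" using that sym by (auto simp: compl_adj_def)
    have "X q p * Y q q - X q q * Y q p = 0" using key[OF that] .
    then have 1: "Poly_Mapping.lookup (G q) (Leaf p) = 0"
      using pq by (simp add: Xd Yd Gbb)
    have "X q p * Y b q - X q q * Y b p = 0" using key[OF that] .
    then show ?thesis using pq 1 by (simp add: Xd Yd Gbb)
  qed
  have "\<forall>c. \<exists>d. compl_adj E c d"
  proof
    fix c
    obtain d :: 'a where "d \<noteq> c"
    proof -
      have "\<not> (UNIV :: 'a set) \<subseteq> {c}"
      proof
        assume "(UNIV :: 'a set) \<subseteq> {c}"
        then have "card (UNIV :: 'a set) \<le> card {c}" by (intro card_mono) auto
        then show False using n2 by simp
      qed
      then show ?thesis using that by blast
    qed
    then have "(compl_adj E)\<^sup>*\<^sup>* c d" using conn by (simp add: compl_connected_def)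
    then show "\<exists>d. compl_adj E c d" using \<open>d \<noteq> c\<close>
      by (cases rule: converse_rtranclpE) auto
  qed
  then have "\<forall>c. Poly_Mapping.lookup g0 (Leaf c) = 0"
  proof (intro allI)
    fix c
    assume "\<forall>c. \<exists>d. compl_adj E c d"
    then obtain d where "compl_adj E c d" by blast
    from zero[OF this, of a0] show "Poly_Mapping.lookup g0 (Leaf c) = 0" using G(3) by simp
  qed
  then show "omega1 g0 = 0" by (simp add: omega1_def)
qed

end
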